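(* Let $q$ be a square with $\operatorname{char}(\mathbb{F}_q)\neq 2$, and let $X=\{F=0\}\subset\mathbb{P}^n$ be a reduced Frobenius nonclassical hypersurface over $\mathbb{F}_q$ of degree $\sqrt q+1$ such that $F_{1,0}=cF^{\sqrt q}$ for some nonzero constant $c$. Then $X$ is Hermitian.
   Context: $F\in\mathbb{F}_q[x_0,\dots,x_n]$ is homogeneous, $F_{1,0}:=\sum_{i=0}^n x_i^q\frac{\partial F}{\partial x_i}$, and $X$ is Frobenius nonclassical if $F$ divides $F_{1,0}$; reduced means $F$ is squarefree. A Hermitian variety is a hypersurface defined by $\overline{\mathbf{x}}\cdot H\cdot\mathbf{x}^t$ where $\mathbf{x}=(x_0,\dots,x_n)$, $\overline{a}=a^{\sqrt q}$ applied entrywise, and $H$ is a nonzero matrix over $\mathbb{F}_q$ with $\overline{H}^t=H$ (equivalently, projectively equivalent over $\mathbb{F}_q$ to $\sum_{i=0}^r x_i^{\sqrt q+1}=0$ for some $0\le r\le n$). *)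

theory Defs
  imports "HOL-Library.Poly_Mapping" "HOL-Computational_Algebra.Squarefree"
begin

type_synonym ('v, 'a) mpoly = "('v \<Rightarrow>\<^sub>0 nat) \<Rightarrow>\<^sub>0 'a"

definition mmonom :: "('v \<Rightarrow>\<^sub>0 nat) \<Rightarrow> 'a::zero \<Rightarrow> ('v, 'a) mpoly" where
  "mmonom m c = Poly_Mapping.single m c"

definition const :: "'a::zero \<Rightarrow> ('v, 'a) mpoly" where
  "const c = mmonom 0 c"

definition var_pow :: "'v \<Rightarrow> nat \<Rightarrow> ('v, 'a::{zero,one}) mpoly" where
  "var_pow i k = mmonom (Poly_Mapping.single i k) 1"

definition var :: "'v \<Rightarrow> ('v, 'a::{zero,one}) mpoly" where
  "var i = var_pow i 1"

definition total_degree :: "('v \<Rightarrow>\<^sub>0 nat) \<Rightarrow> nat" where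
  "total_degree m = (\<Sum>j\<in>Poly_Mapping.keys m. Poly_Mapping.lookup m j)"

definition homogeneous :: "nat \<Rightarrow> ('v, 'a::zero) mpoly \<Rightarrow> bool" where
  "homogeneous d F \<longleftrightarrow> (\<forall>m\<in>Poly_Mapping.keys F. total_degree m = d)"

definition pdiff :: "'v \<Rightarrow> ('v, 'a::comm_ring_1) mpoly \<Rightarrow> ('v, 'a) mpoly" where
  "pdiff i F = (\<Sum>m\<in>Poly_Mapping.keys F. mmonom (m - Poly_Mapping.single i 1) (of_nat (Poly_Mapping.lookup m i) * Poly_Mapping.lookup F m))"

definition F10 :: "('v::finite, 'a::{finite,field}) mpoly \<Rightarrow> ('v, 'a) mpoly" where
  "F10 F = (\<Sum>i\<in>UNIV. var_pow i (card (UNIV :: 'a set)) * pdiff i F)"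

definition frobenius_nonclassical :: "('v::finite, 'a::{finite,field}) mpoly \<Rightarrow> bool" where
  "frobenius_nonclassical F \<longleftrightarrow> F dvd F10 F"

text \<open>Hermitian polynomial xbar H x^t, with conjugation a \<mapsto> a^r where r = sqrt q.\<close>
definition hermitian_poly :: "nat \<Rightarrow> ('v::finite \<Rightarrow> 'v \<Rightarrow> 'a::comm_ring_1) \<Rightarrow> ('v, 'a) mpoly" where
  "hermitian_poly r H = (\<Sum>i\<in>UNIV. \<Sum>j\<in>UNIV. const (H i j) * var_pow i r * var j)"

definition hermitian_matrix :: "nat \<Rightarrow> ('v \<Rightarrow> 'v \<Rightarrow> 'a::comm_ring_1) \<Rightarrow> bool" where
  "hermitian_matrix r H \<longleftrightarrow> (\<forall>i j. H j i ^ r = H i j)"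

definition is_hermitian :: "nat \<Rightarrow> ('v::finite, 'a::field) mpoly \<Rightarrow> bool" where
  "is_hermitian r F \<longleftrightarrow> (\<exists>H a. H \<noteq> (\<lambda>_ _. 0) \<and> hermitian_matrix r H \<and> a \<noteq> 0 \<and>
      F = const a * hermitian_poly r H)"

end

theory Submission
  imports Defs "HOL-Computational_Algebra.Primes" "HOL-Computational_Algebra.Polynomial" "HOL-Algebra.Sylow"
begin


definition scale :: "nat \<Rightarrow> ('v \<Rightarrow>\<^sub>0 nat) \<Rightarrow> ('v \<Rightarrow>\<^sub>0 nat)" where
  "scale k m = Poly_Mapping.map ((*) k) m"

lemma lookup_scale [simp]: "Poly_Mapping.lookup (scale k m) v = k * Poly_Mapping.lookup m v"
  by (simp add: scale_def Poly_Mapping.map.rep_eq when_def)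

lemma scale_inj: "k > 0 \<Longrightarrow> scale k m = scale k m' \<Longrightarrow> m = m'"
  by (metis lookup_scale mult_left_cancel not_gr0 poly_mapping_eqI)

lemma scale_Suc: "scale (Suc k) m = m + scale k m"
  by (rule poly_mapping_eqI) (simp add: lookup_add)

lemma scale_0: "scale 0 m = 0"
  by (rule poly_mapping_eqI) simp

lemma single_power: "(Poly_Mapping.single m (b::'a::comm_semiring_1)) ^ k = Poly_Mapping.single (scale k m) (b ^ k)"
  by (induction k) (simp_all add: scale_0 scale_Suc mult_single)

lemma poly_mapping_monomials:
  fixes F :: "('a \<Rightarrow>\<^sub>0 'b::comm_monoid_add)"
  shows "F = (\<Sum>m\<in>Poly_Mapping.keys F. Poly_Mapping.single m (Poly_Mapping.lookup F m))"
proof (rule poly_mapping_eqI)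
  fix u
  have "Poly_Mapping.lookup (\<Sum>m\<in>Poly_Mapping.keys F. Poly_Mapping.single m (Poly_Mapping.lookup F m)) u
      = (\<Sum>m\<in>Poly_Mapping.keys F. (if m = u then Poly_Mapping.lookup F m else 0))"
    unfolding lookup_sum by (rule sum.cong) (auto simp: lookup_single when_def)
  also have "\<dots> = Poly_Mapping.lookup F u"
    by (simp add: sum.delta' in_keys_iff)
  finally show "Poly_Mapping.lookup F u = Poly_Mapping.lookup (\<Sum>m\<in>Poly_Mapping.keys F. Poly_Mapping.single m (Poly_Mapping.lookup F m)) u" by simp
qed

lemma lookup_single_mult:
  fixes P :: "('a::cancel_comm_monoid_add \<Rightarrow>\<^sub>0 'b::comm_semiring_1)" and b :: 'b
  shows "Poly_Mapping.lookup (Poly_Mapping.single d b * P) (d + w) = b * Poly_Mapping.lookup P w"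
proof -
  have "Poly_Mapping.lookup (Poly_Mapping.single d b * P) (d + w) =
     (\<Sum>l. Poly_Mapping.lookup (Poly_Mapping.single d b) l * (\<Sum>q. Poly_Mapping.lookup P q when d + w = l + q))"
    by (rule lookup_mult)
  also have "\<dots> = (\<Sum>l. (b * (\<Sum>q. Poly_Mapping.lookup P q when d + w = d + q)) when l = d)"
    by (rule Sum_any.cong) (auto simp: lookup_single when_def)
  also have "\<dots> = b * (\<Sum>q. Poly_Mapping.lookup P q when d + w = d + q)" by simp
  also have "(\<Sum>q. Poly_Mapping.lookup P q when d + w = d + q) = (\<Sum>q. Poly_Mapping.lookup P q when q = w)"
    by (rule Sum_any.cong) (auto simp: when_def)
  also have "\<dots> = Poly_Mapping.lookup P w" by simp
  finally show ?thesis .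
qed

lemma lookup_single_mult0:
  fixes P :: "('a::cancel_comm_monoid_add \<Rightarrow>\<^sub>0 'b::comm_semiring_1)" and b :: 'b
  assumes "\<And>w. u \<noteq> d + w"
  shows "Poly_Mapping.lookup (Poly_Mapping.single d b * P) u = 0"
proof -
  have "Poly_Mapping.lookup (Poly_Mapping.single d b * P) u =
     (\<Sum>l. Poly_Mapping.lookup (Poly_Mapping.single d b) l * (\<Sum>q. Poly_Mapping.lookup P q when u = l + q))"
    by (rule lookup_mult)
  also have "\<dots> = 0"
  proof -
    have "Poly_Mapping.lookup (Poly_Mapping.single d b) l * (\<Sum>q. Poly_Mapping.lookup P q when u = l + q) = 0" for l
    proof -
    have "(\<Sum>q. Poly_Mapping.lookup P q when u = d + q) = 0"
      using assms by simp
    then show "Poly_Mapping.lookup (Poly_Mapping.single d b) l * (\<Sum>q. Poly_Mapping.lookup P q when u = l + q) = 0"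
      by (cases "l = d") (simp_all add: lookup_single when_def)
    qed
    then show ?thesis by simp
  qed
  finally show ?thesis by simp
qed

lemma lookup_const_mult: fixes c :: "'a::comm_semiring_1" shows "Poly_Mapping.lookup (const c * P) u = c * Poly_Mapping.lookup P u"
  using lookup_single_mult[of 0 c P u] by (simp add: const_def mmonom_def)

lemma lookup_pdiff:
  fixes F :: "('v, 'a::comm_ring_1) mpoly" and w :: "'v \<Rightarrow>\<^sub>0 nat"
  shows "Poly_Mapping.lookup (pdiff i F) w = of_nat (Poly_Mapping.lookup w i + 1) * Poly_Mapping.lookup F (w + Poly_Mapping.single i 1)"
proof -
  have "Poly_Mapping.lookup (pdiff i F) w = (\<Sum>m\<in>Poly_Mapping.keys F. (if m - Poly_Mapping.single i 1 = w then of_nat (Poly_Mapping.lookup m i) * Poly_Mapping.lookup F m else 0))"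
    by (simp add: pdiff_def lookup_sum mmonom_def lookup_single when_def)
  also have "\<dots> = (\<Sum>m\<in>Poly_Mapping.keys F. (if m = w + Poly_Mapping.single i 1 then of_nat (Poly_Mapping.lookup m i) * Poly_Mapping.lookup F m else 0))"
  proof (rule sum.cong[OF refl])
    fix m assume "m \<in> Poly_Mapping.keys F"
    show "(if m - Poly_Mapping.single i 1 = w then of_nat (Poly_Mapping.lookup m i) * Poly_Mapping.lookup F m else 0) =
          (if m = w + Poly_Mapping.single i 1 then of_nat (Poly_Mapping.lookup m i) * Poly_Mapping.lookup F m else 0)"
    proof (cases "Poly_Mapping.lookup m i = 0")
      case True
      then have "m \<noteq> w + Poly_Mapping.single i 1"
        by (metis add_is_0 lookup_add lookup_single_eq one_neq_zero)
      then show ?thesis using True by simp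
    next
      case False
      have "(m - Poly_Mapping.single i 1 = w) \<longleftrightarrow> (m = w + Poly_Mapping.single i 1)"
      proof
        assume "m - Poly_Mapping.single i 1 = w"
        then show "m = w + Poly_Mapping.single i 1"
          using False by (auto intro!: poly_mapping_eqI simp: lookup_add lookup_minus lookup_single when_def)
      next
        assume "m = w + Poly_Mapping.single i 1"
        then show "m - Poly_Mapping.single i 1 = w"
          by (auto intro!: poly_mapping_eqI simp: lookup_add lookup_minus)
      qed
      then show ?thesis by simp
    qed
  qed
  also have "\<dots> = of_nat (Poly_Mapping.lookup w i + 1) * Poly_Mapping.lookup F (w + Poly_Mapping.single i 1)"
    by (simp add: sum.delta' in_keys_iff lookup_add)
  finally show ?thesis .
qed




lemma ff_power_card:
  fixes x :: "'a :: {finite,field}"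
  shows   "x ^ card (UNIV :: 'a set) = x"
proof (cases "x = 0")
  case False
  have "x * (\<Prod>y\<in>UNIV-{0}. x * y) = x * x ^ (card (UNIV :: 'a set) - 1) * \<Prod>(UNIV-{0})"
    by (simp add: prod.distrib mult_ac)
  also have "x * x ^ (card (UNIV :: 'a set) - 1) = x ^ Suc (card (UNIV :: 'a set) - 1)"
    by (subst power_Suc) auto
  also have "Suc (card (UNIV :: 'a set) - 1) = card (UNIV :: 'a set)"
    using finite_UNIV_card_ge_0[where ?'a = 'a] by simp
  also have "(\<Prod>y\<in>UNIV-{0}. x * y) = (\<Prod>y\<in>UNIV-{0}. y)"
    by (rule prod.reindex_bij_witness[of _ "\<lambda>y. y / x" "\<lambda>y. x * y"]) (use False in auto)
  finally show ?thesis
    by simp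
qed (use finite_UNIV_card_ge_0[where ?'a = 'a] in auto)

lemma ff_CHAR_prime: "prime CHAR('a :: {finite,field})"
  by (intro prime_CHAR_semidom finite_imp_CHAR_pos) simp

lemma ff_prime_dvd_card:
  assumes l: "prime l" and dv: "l dvd card (UNIV :: 'a :: {finite,field} set)"
  shows "l = CHAR('a)"
proof -
  define G where "G = \<lparr> carrier = (UNIV :: 'a set), monoid.mult = (+), one = (0 :: 'a) \<rparr>"
  have grp: "group G"
  proof (rule groupI)
    fix x assume x: "x \<in> carrier G"
    show "\<exists>y\<in>carrier G. y \<otimes>\<^bsub>G\<^esub> x = \<one>\<^bsub>G\<^esub>"
      by (intro bexI[of _ "-x"]) (auto simp: G_def)
  qed (auto simp: G_def add_ac)
  obtain m where m: "card (UNIV :: 'a set) = l ^ 1 * m" using dv by auto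
  have "order G = l ^ 1 * m" using m by (simp add: order_def G_def)
  then have "\<exists>H. subgroup H G \<and> card H = l ^ 1"
    by (intro sylow_thm[OF l grp]) (auto simp: G_def)
  then obtain H where H: "subgroup H G" "card H = l ^ 1" by blast
  have l2: "l \<ge> 2" using l prime_ge_2_nat by blast
  have fin: "finite H" using H(2) l2 card.infinite by fastforce
  have "card H > 1" using H(2) l2 by simp
  then have "\<exists>a\<in>H. \<exists>b\<in>H. a \<noteq> b"
    using fin card_le_Suc0_iff_eq by (metis One_nat_def not_le)
  then obtain x where xH: "x \<in> H" and x0: "x \<noteq> 0"
    by metis
  have clos: "h + x \<in> H" if "h \<in> H" for h
    using subgroup.m_closed[OF H(1), of h x] that xH by (simp add: G_def)
  have inj: "inj_on (\<lambda>h. h + x) H" by (auto intro: inj_onI)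
  have img: "(\<lambda>h. h + x) ` H = H"
    using inj clos fin by (metis card_image card_subset_eq image_subsetI)
  have "sum (\<lambda>h. h) H = sum (\<lambda>h. h) ((\<lambda>h. h + x) ` H)" using img by simp
  also have "\<dots> = sum (\<lambda>h. h + x) H" using inj by (simp add: sum.reindex)
  also have "\<dots> = sum (\<lambda>h. h) H + of_nat (card H) * x" by (simp add: sum.distrib)
  finally have "of_nat (card H) * x = 0" by simp
  then have "(of_nat l :: 'a) = 0" using x0 H(2) by simp
  then have "CHAR('a) dvd l" by (simp add: of_nat_eq_0_iff_char_dvd)
  then show ?thesis using l ff_CHAR_prime primes_dvd_imp_eq by metis
qed

lemma ff_card_prime_power: "\<exists>k. card (UNIV :: 'a :: {finite,field} set) = CHAR('a) ^ k"
proof -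
  let ?n = "card (UNIV :: 'a set)"
  let ?p = "CHAR('a)"
  have n0: "?n \<noteq> 0" by (simp add: finite_UNIV_card_ge_0)
  have pu: "\<not> is_unit ?p" using ff_CHAR_prime[where 'a='a] by (simp add: not_prime_unit)
  obtain y where y: "?n = ?p ^ multiplicity ?p ?n * y" "\<not> ?p dvd y"
    using multiplicity_decompose'[OF n0 pu] by blast
  have "y = 1"
  proof (rule ccontr)
    assume "y \<noteq> 1"
    then obtain l where "prime l" "l dvd y" using prime_factor_nat by blast
    then have "l dvd ?p ^ multiplicity ?p ?n * y" using dvd_mult by blast
    then have "l dvd ?n" using y(1) by metis
    then have "l = ?p" using ff_prime_dvd_card \<open>prime l\<close> by blast
    then show False using \<open>l dvd y\<close> y(2) by simp
  qed
  then show ?thesis using y(1) by auto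
qed



lemma card_roots_le:
  fixes y :: "'a::field"
  assumes n: "n \<ge> 1"
  shows "card {x. x ^ n = y} \<le> n"
proof -
  define p where "p = monom (1::'a) n - [:y:]"
  have cn: "coeff p n = 1" using n by (simp add: p_def coeff_monom coeff_pCons split: nat.split)
  then have p0: "p \<noteq> 0" by auto
  have dg: "degree p \<le> n"
    unfolding p_def by (metis degree_diff_le degree_monom_le degree_pCons_0 le0)
  have "{x. x ^ n = y} = {x. poly p x = 0}" by (auto simp: p_def poly_monom)
  then show ?thesis using card_poly_roots_bound[OF p0] dg by simp
qed

lemma ff_r_props:
  assumes q: "card (UNIV :: 'a :: {finite,field} set) = r ^ 2"
  shows "r \<ge> 2" "(of_nat r :: 'a) = 0" "\<exists>i. r = CHAR('a) ^ i"
proof -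
  obtain k where k: "card (UNIV :: 'a set) = CHAR('a) ^ k" using ff_card_prime_power by blast
  have "r dvd CHAR('a) ^ k" using q k by (metis dvd_triv_left power2_eq_square)
  then obtain i where i: "r = CHAR('a) ^ i" using divides_primepow_nat[OF ff_CHAR_prime] by blast
  then show "\<exists>i. r = CHAR('a) ^ i" by blast
  have "card {0::'a, 1} \<le> card (UNIV :: 'a set)" by (rule card_mono) auto
  then have c2: "card (UNIV :: 'a set) \<ge> 2" by simp
  show r2: "r \<ge> 2"
  proof (rule ccontr)
    assume "\<not> r \<ge> 2"
    then have "r \<le> 1" by simp
    then have "r ^ 2 \<le> 1" by (metis One_nat_def power_le_one zero_le)
    then show False using c2 q by simp
  qed
  have "i \<noteq> 0" using r2 i by (cases i) auto
  then show "(of_nat r :: 'a) = 0" using i by (simp add: of_nat_power)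
qed

lemma ff_root_exists:
  fixes c :: "'a :: {finite,field}"
  assumes q: "card (UNIV :: 'a set) = r ^ 2" and r2: "r \<ge> 2" and c: "c ^ (r + 1) = 1"
  shows "\<exists>\<mu>. \<mu> \<noteq> 0 \<and> \<mu> ^ (r - 1) = c"
proof -
  define U where "U = (UNIV :: 'a set) - {0}"
  define f where "f = (\<lambda>x::'a. x ^ (r - 1))"
  define S where "S = {y::'a. y ^ (r + 1) = 1}"
  have cardU: "card U = (r - 1) * (r + 1)"
  proof -
    have "card U = r ^ 2 - 1" unfolding U_def using q by (simp add: card_Diff_subset)
    also have "\<dots> = (r - 1) * (r + 1)" using r2
      by (simp add: power2_eq_square algebra_simps diff_mult_distrib)
    finally show ?thesis .
  qed
  have qq: "card (UNIV :: 'a set) = Suc ((r - 1) * (r + 1))"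
    using q r2 by (simp add: power2_eq_square algebra_simps diff_mult_distrib)
  have pw: "x ^ ((r - 1) * (r + 1)) = 1" if "x \<noteq> 0" for x :: 'a
  proof -
    have "x ^ ((r - 1) * (r + 1)) * x = x"
      using ff_power_card[of x] qq by (simp add: mult.commute)
    then show ?thesis using that by simp
  qed
  have fU: "f ` U \<subseteq> S"
  proof
    fix y assume "y \<in> f ` U"
    then obtain x where x: "x \<noteq> 0" "y = x ^ (r - 1)" by (auto simp: U_def f_def)
    then have "y ^ (r + 1) = x ^ ((r - 1) * (r + 1))" by (simp only: power_mult)
    then show "y \<in> S" using pw[OF x(1)] by (simp add: S_def)
  qed
  have cS: "card S \<le> r + 1" unfolding S_def by (rule card_roots_le) simp
  have fib: "card {x \<in> U. f x = y} \<le> r - 1" for y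
  proof -
    have "card {x \<in> U. f x = y} \<le> card {x. x ^ (r - 1) = y}"
      by (rule card_mono) (auto simp: f_def)
    also have "\<dots> \<le> r - 1" by (rule card_roots_le) (use r2 in simp)
    finally show ?thesis .
  qed
  have "U = (\<Union>y\<in>f ` U. {x \<in> U. f x = y})" by auto
  then have "card U \<le> (\<Sum>y\<in>f ` U. card {x \<in> U. f x = y})"
    by (metis card_UN_le finite)
  also have "\<dots> \<le> card (f ` U) * (r - 1)"
    using sum_bounded_above[of "f ` U" "\<lambda>y. card {x \<in> U. f x = y}" "r - 1"] fib by simp
  finally have "(r - 1) * (r + 1) \<le> (r - 1) * card (f ` U)" using cardU by (simp add: mult.commute)
  moreover have "r - 1 > 0" using r2 by simp
  ultimately have "r + 1 \<le> card (f ` U)" by (meson mult_le_cancel1)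
  then have "f ` U = S" using fU cS by (metis card_seteq finite le_trans)
  moreover have "c \<in> S" using c by (simp add: S_def)
  ultimately obtain x where "x \<in> U" "f x = c" by (metis imageE)
  then show ?thesis by (auto simp: U_def f_def)
qed



lemma arith1:
  fixes r x y :: nat
  assumes "r \<ge> 2" "1 \<le> x" "x \<le> r + 1" "r * r + (x - 1) = r * y"
  shows "x = 1 \<or> x = r + 1"
proof -
  have "y \<ge> r"
  proof (rule ccontr)
    assume "\<not> y \<ge> r"
    then have "y + 1 \<le> r" by simp
    then have "r * (y + 1) \<le> r * r" by (rule mult_le_mono2)
    then show False using assms by (simp add: algebra_simps)
  qed
  then obtain t where t: "y = r + t" by (metis le_add_diff_inverse)
  have "x - 1 = r * t" using assms(4) t by (simp add: algebra_simps)
  moreover have "t \<le> 1"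
  proof (rule ccontr)
    assume "\<not> t \<le> 1"
    then have "r * 2 \<le> r * t" by simp
    then show False using \<open>x - 1 = r * t\<close> assms by linarith
  qed
  ultimately show ?thesis using assms by (cases t) auto
qed

lemma CHAR_mpoly: "CHAR(('v, 'a::comm_ring_1) mpoly) = CHAR('a)"
proof (rule CHAR_eqI)
  show "of_nat CHAR('a) = (0 :: ('v, 'a) mpoly)"
    by (rule poly_mapping_eqI) (simp add: lookup_of_nat when_def)
  fix x assume "of_nat x = (0 :: ('v, 'a) mpoly)"
  then have "Poly_Mapping.lookup (of_nat x :: ('v, 'a) mpoly) 0 = 0" by simp
  then have "(of_nat x :: 'a) = 0" by (simp add: lookup_of_nat)
  then show "CHAR('a) dvd x" by (simp add: of_nat_eq_0_iff_char_dvd)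
qed

lemma lookup_power_r:
  fixes F :: "('v, 'a::{finite,field}) mpoly"
  assumes q: "card (UNIV :: 'a set) = r ^ 2"
  shows "Poly_Mapping.lookup (F ^ r) u =
     (\<Sum>m\<in>Poly_Mapping.keys F. (Poly_Mapping.lookup F m ^ r when scale r m = u))"
proof -
  obtain i where i: "r = CHAR('a) ^ i" using ff_r_props(3)[OF q] by blast
  have pr: "prime CHAR(('v, 'a) mpoly)" by (simp add: CHAR_mpoly ff_CHAR_prime)
  have "F ^ r = (\<Sum>m\<in>Poly_Mapping.keys F. Poly_Mapping.single m (Poly_Mapping.lookup F m)) ^ r"
    by (subst poly_mapping_monomials[of F]) simp
  also have "\<dots> = (\<Sum>m\<in>Poly_Mapping.keys F. Poly_Mapping.single m (Poly_Mapping.lookup F m) ^ r)"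
    by (rule freshmans_dream_sum'[OF pr]) (simp add: CHAR_mpoly i)
  also have "\<dots> = (\<Sum>m\<in>Poly_Mapping.keys F. Poly_Mapping.single (scale r m) (Poly_Mapping.lookup F m ^ r))"
    by (simp add: single_power)
  finally show ?thesis by (simp only: lookup_sum lookup_single)
qed

lemma lookup_power_r_scale:
  fixes F :: "('v, 'a::{finite,field}) mpoly"
  assumes q: "card (UNIV :: 'a set) = r ^ 2"
  shows "Poly_Mapping.lookup (F ^ r) (scale r m) = Poly_Mapping.lookup F m ^ r"
proof -
  have r0: "r > 0" using ff_r_props(1)[OF q] by simp
  have "Poly_Mapping.lookup (F ^ r) (scale r m) =
     (\<Sum>m'\<in>Poly_Mapping.keys F. (Poly_Mapping.lookup F m' ^ r when m' = m))"
    unfolding lookup_power_r[OF q]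
    by (rule sum.cong) (use scale_inj[OF r0] in \<open>auto simp: when_def\<close>)
  also have "\<dots> = Poly_Mapping.lookup F m ^ r"
    using r0 by (simp add: when_def sum.delta' in_keys_iff)
  finally show ?thesis .
qed

lemma lookup_power_r_zero:
  fixes F :: "('v, 'a::{finite,field}) mpoly"
  assumes q: "card (UNIV :: 'a set) = r ^ 2" and "\<And>m. u \<noteq> scale r m"
  shows "Poly_Mapping.lookup (F ^ r) u = 0"
proof -
  have "\<forall>m. scale r m \<noteq> u" using assms(2) by metis
  then show ?thesis unfolding lookup_power_r[OF q] by (simp add: when_def)
qed

lemma lookup_F10:
  fixes F :: "('v::finite, 'a::{finite,field}) mpoly" and w :: "'v \<Rightarrow>\<^sub>0 nat"
  assumes small: "\<And>i. i \<noteq> j \<Longrightarrow> Poly_Mapping.lookup w i < card (UNIV :: 'a set)"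
  shows "Poly_Mapping.lookup (F10 F) (Poly_Mapping.single j (card (UNIV :: 'a set)) + w) =
         of_nat (Poly_Mapping.lookup w j + 1) * Poly_Mapping.lookup F (w + Poly_Mapping.single j 1)"
proof -
  let ?q = "card (UNIV :: 'a set)"
  let ?u = "Poly_Mapping.single j ?q + w"
  have "Poly_Mapping.lookup (F10 F) ?u =
        (\<Sum>i\<in>UNIV. Poly_Mapping.lookup (Poly_Mapping.single (Poly_Mapping.single i ?q) 1 * pdiff i F) ?u)"
    by (simp only: F10_def var_pow_def mmonom_def lookup_sum)
  also have "\<dots> = (\<Sum>i\<in>UNIV. if i = j then Poly_Mapping.lookup (pdiff j F) w else 0)"
  proof (rule sum.cong[OF refl])
    fix i :: 'v
    show "Poly_Mapping.lookup (Poly_Mapping.single (Poly_Mapping.single i ?q) 1 * pdiff i F) ?u =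
          (if i = j then Poly_Mapping.lookup (pdiff j F) w else 0)"
    proof (cases "i = j")
      case True
      then show ?thesis using lookup_single_mult[of "Poly_Mapping.single j ?q" 1 "pdiff j F" w] by simp
    next
      case False
      have "?u \<noteq> Poly_Mapping.single i ?q + w'" for w'
      proof
        assume "?u = Poly_Mapping.single i ?q + w'"
        then have "Poly_Mapping.lookup ?u i = Poly_Mapping.lookup (Poly_Mapping.single i ?q + w') i" by simp
        then have "Poly_Mapping.lookup w i \<ge> ?q" using False by (simp add: lookup_add lookup_single when_def)
        then show False using small[OF False] by simp
      qed
      then show ?thesis using False lookup_single_mult0 by metis
    qed
  qed
  also have "\<dots> = Poly_Mapping.lookup (pdiff j F) w" by simp
  finally show ?thesis by (simp add: lookup_pdiff)
qed




abbreviation ee :: "'v \<Rightarrow> nat \<Rightarrow> ('v \<Rightarrow>\<^sub>0 nat)" where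
  "ee i k \<equiv> Poly_Mapping.single i k"

lemma ee_unique:
  assumes r2: "(r::nat) \<ge> 2" and eq: "ee i r + ee j 1 = ee k r + ee l 1"
  shows "i = k \<and> j = l"
proof -
  have ik: "i = k"
  proof (rule ccontr)
    assume "i \<noteq> k"
    have "Poly_Mapping.lookup (ee i r + ee j 1) i = Poly_Mapping.lookup (ee k r + ee l 1) i"
      using eq by simp
    then show False using \<open>i \<noteq> k\<close> r2
      by (auto simp: lookup_add lookup_single when_def split: if_splits)
  qed
  then have "ee j 1 = ee l 1" using eq by simp
  then have "Poly_Mapping.lookup (ee j 1) j = Poly_Mapping.lookup (ee l 1) j" by simp
  then have "j = l" by (auto simp: lookup_single when_def split: if_splits)
  then show ?thesis using ik by simp
qed

lemma sum_UNIV_keys: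
  fixes m :: "'v::finite \<Rightarrow>\<^sub>0 nat"
  shows "total_degree m = (\<Sum>k\<in>UNIV. Poly_Mapping.lookup m k)"
  unfolding total_degree_def
  by (rule sum.mono_neutral_left) (auto simp: in_keys_iff)

lemma shape:
  fixes F :: "('v::finite, 'a::{finite,field}) mpoly" and r :: nat and c :: 'a
  assumes q: "card (UNIV :: 'a set) = r ^ 2"
    and homog: "homogeneous (r + 1) F"
    and F10_eq: "F10 F = const c * F ^ r"
    and m: "m \<in> Poly_Mapping.keys F"
  shows "\<exists>i j. m = ee i r + ee j 1"
proof -
  have r2: "r \<ge> 2" and r0: "(of_nat r :: 'a) = 0" using ff_r_props[OF q] by auto
  have qq: "card (UNIV :: 'a set) = r * r" using q by (simp add: power2_eq_square)
  have deg: "(\<Sum>k\<in>UNIV. Poly_Mapping.lookup m k) = r + 1"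
    using homog m by (simp add: homogeneous_def sum_UNIV_keys)
  have le: "Poly_Mapping.lookup m k \<le> r + 1" for k
    using deg member_le_sum[of k UNIV "Poly_Mapping.lookup m"] by simp
  obtain j where j: "(of_nat (Poly_Mapping.lookup m j) :: 'a) \<noteq> 0"
  proof (rule ccontr)
    assume "\<not> thesis"
    then have "\<forall>k. (of_nat (Poly_Mapping.lookup m k) :: 'a) = 0" using that by blast
    then have "(of_nat (\<Sum>k\<in>UNIV. Poly_Mapping.lookup m k) :: 'a) = 0" by simp
    then show False using deg r0 by simp
  qed
  then have "Poly_Mapping.lookup m j \<noteq> 0" by (rule contrapos_nn) simp
  then have mj: "Poly_Mapping.lookup m j \<ge> 1" by simp
  define w where "w = m - ee j 1"
  have mw: "m = w + ee j 1"
    by (rule poly_mapping_eqI) (use mj in \<open>auto simp: w_def lookup_add lookup_minus lookup_single when_def\<close>)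
  have wj: "Poly_Mapping.lookup w j + 1 = Poly_Mapping.lookup m j"
    by (subst mw) (simp add: lookup_add)
  have wk: "Poly_Mapping.lookup w k = Poly_Mapping.lookup m k" if "k \<noteq> j" for k
    by (subst mw) (use that in \<open>auto simp: lookup_add lookup_single when_def\<close>)
  have small: "Poly_Mapping.lookup w i < card (UNIV :: 'a set)" if "i \<noteq> j" for i
  proof -
    have "Poly_Mapping.lookup w i \<le> r + 1" using wk[OF that] le by simp
    also have "r + 1 < r * r" using r2 mult_le_mono1[OF r2, of r] by linarith
    finally show ?thesis using qq by simp
  qed
  define u where "u = ee j (card (UNIV :: 'a set)) + w"
  have "Poly_Mapping.lookup (F10 F) u = of_nat (Poly_Mapping.lookup m j) * Poly_Mapping.lookup F m"
  proof -
    have "of_nat (Poly_Mapping.lookup w j + 1) * Poly_Mapping.lookup F (w + ee j 1) =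
        (of_nat (Poly_Mapping.lookup m j) :: 'a) * Poly_Mapping.lookup F m"
      by (simp only: wj mw[symmetric])
    then show ?thesis unfolding u_def using lookup_F10[where F=F, OF small] by simp
  qed
  also have "\<dots> \<noteq> 0" using j m by (simp add: in_keys_iff)
  finally have "Poly_Mapping.lookup (F ^ r) u \<noteq> 0"
    using F10_eq by (auto simp: lookup_const_mult)
  then obtain m' where m': "u = scale r m'" using lookup_power_r_zero[OF q] by blast
  have uk: "Poly_Mapping.lookup u k = r * Poly_Mapping.lookup m' k" for k
    using m' by simp
  have ok: "Poly_Mapping.lookup m k = r * Poly_Mapping.lookup m' k" if "k \<noteq> j" for k
    using uk[of k] that wk[OF that] by (simp add: u_def lookup_add lookup_single when_def)
  have "r * r + (Poly_Mapping.lookup m j - 1) = r * Poly_Mapping.lookup m' j"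
    using uk[of j] wj qq by (simp add: u_def lookup_add)
  then have cases: "Poly_Mapping.lookup m j = 1 \<or> Poly_Mapping.lookup m j = r + 1"
    using arith1[OF r2 mj le] by blast
  have split: "(\<Sum>k\<in>UNIV. Poly_Mapping.lookup m k) =
      Poly_Mapping.lookup m j + (\<Sum>k\<in>UNIV - {j}. Poly_Mapping.lookup m k)"
    by (simp add: sum.remove)
  show ?thesis
  proof (cases "Poly_Mapping.lookup m j = r + 1")
    case True
    then have "(\<Sum>k\<in>UNIV - {j}. Poly_Mapping.lookup m k) = 0" using deg split by simp
    then have z: "Poly_Mapping.lookup m k = 0" if "k \<noteq> j" for k using that by simp
    have "m = ee j r + ee j 1"
      by (rule poly_mapping_eqI) (use True z in \<open>auto simp: lookup_add lookup_single when_def\<close>)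
    then show ?thesis by blast
  next
    case False
    then have m1: "Poly_Mapping.lookup m j = 1" using cases by simp
    then have s: "(\<Sum>k\<in>UNIV - {j}. Poly_Mapping.lookup m k) = r" using deg split by simp
    have "\<not> (\<forall>k\<in>UNIV - {j}. Poly_Mapping.lookup m k = 0)"
    proof
      assume "\<forall>k\<in>UNIV - {j}. Poly_Mapping.lookup m k = 0"
      then have "(\<Sum>k\<in>UNIV - {j}. Poly_Mapping.lookup m k) = 0" by simp
      then show False using s r2 by simp
    qed
    then obtain k where k: "k \<noteq> j" "Poly_Mapping.lookup m k \<noteq> 0" by blast
    have "Poly_Mapping.lookup m k \<le> r"
      using s member_le_sum[of k "UNIV - {j}" "Poly_Mapping.lookup m"] k by simp
    moreover have "Poly_Mapping.lookup m k \<ge> r" using ok[OF k(1)] k(2) by simp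
    ultimately have mk: "Poly_Mapping.lookup m k = r" by simp
    have "(\<Sum>k\<in>UNIV - {j}. Poly_Mapping.lookup m k) =
        Poly_Mapping.lookup m k + (\<Sum>k'\<in>UNIV - {j} - {k}. Poly_Mapping.lookup m k')"
      using k(1) by (simp add: sum.remove)
    then have "(\<Sum>k'\<in>UNIV - {j} - {k}. Poly_Mapping.lookup m k') = 0" using s mk by simp
    then have z: "Poly_Mapping.lookup m k' = 0" if "k' \<noteq> j" "k' \<noteq> k" for k' using that by simp
    have "m = ee k r + ee j 1"
      by (rule poly_mapping_eqI) (use m1 mk z k(1) in \<open>auto simp: lookup_add lookup_single when_def\<close>)
    then show ?thesis by blast
  qed
qed




lemma relation:
  fixes F :: "('v::finite, 'a::{finite,field}) mpoly" and r :: nat and c :: 'a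
  assumes q: "card (UNIV :: 'a set) = r ^ 2"
    and F10_eq: "F10 F = const c * F ^ r"
  shows "Poly_Mapping.lookup F (ee i r + ee j 1) = c * Poly_Mapping.lookup F (ee j r + ee i 1) ^ r"
proof -
  have r2: "r \<ge> 2" and r0: "(of_nat r :: 'a) = 0" using ff_r_props[OF q] by auto
  have qq: "card (UNIV :: 'a set) = r * r" using q by (simp add: power2_eq_square)
  have rr: "r < r * r" using r2 mult_le_mono1[OF r2, of r] by linarith
  have small: "Poly_Mapping.lookup (ee i r) k < card (UNIV :: 'a set)" if "k \<noteq> j" for k
    using rr qq by (simp add: lookup_single when_def)
  have c1: "(of_nat (Poly_Mapping.lookup (ee i r) j + 1) :: 'a) = 1"
    using r0 by (simp add: lookup_single when_def)
  have "Poly_Mapping.lookup (F10 F) (ee j (card (UNIV :: 'a set)) + ee i r) =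
        Poly_Mapping.lookup F (ee i r + ee j 1)"
    using lookup_F10[where F=F, OF small] c1 by simp
  moreover have "ee j (card (UNIV :: 'a set)) + ee i r = scale r (ee j r + ee i 1)"
    by (rule poly_mapping_eqI) (auto simp: qq lookup_add lookup_single when_def)
  ultimately have "Poly_Mapping.lookup F (ee i r + ee j 1) =
      Poly_Mapping.lookup (F10 F) (scale r (ee j r + ee i 1))" by simp
  also have "\<dots> = c * Poly_Mapping.lookup F (ee j r + ee i 1) ^ r"
    using F10_eq by (simp add: lookup_const_mult lookup_power_r_scale[OF q])
  finally show ?thesis .
qed

theorem corollary3p16:
  fixes F :: "('v::finite, 'a::{finite,field}) mpoly" and r :: nat and c :: 'a
  assumes q_square: "card (UNIV :: 'a set) = r ^ 2"
    and char_ne_2: "(2::'a) \<noteq> 0"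
    and nonzero: "F \<noteq> 0"
    and homog: "homogeneous (r + 1) F"
    and reduced: "squarefree F"
    and fnc: "frobenius_nonclassical F"
    and c_ne: "c \<noteq> 0"
    and F10_eq: "F10 F = const c * F ^ r"
  shows "is_hermitian r F"
proof -
  note q = q_square
  have r2: "r \<ge> 2" using ff_r_props[OF q] by auto
  have qq: "card (UNIV :: 'a set) = r * r" using q by (simp add: power2_eq_square)
  define A where "A i j = Poly_Mapping.lookup F (ee i r + ee j 1)" for i j
  have rel: "A i j = c * A j i ^ r" for i j
    unfolding A_def by (rule relation[OF q F10_eq])
  have shp: "\<exists>i j. m = ee i r + ee j 1" if "m \<in> Poly_Mapping.keys F" for m
    using shape[OF q homog F10_eq that] .
  have repr: "F = (\<Sum>i\<in>UNIV. \<Sum>j\<in>UNIV. Poly_Mapping.single (ee i r + ee j 1) (A i j))"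
  proof (rule poly_mapping_eqI)
    fix u
    have L: "Poly_Mapping.lookup (\<Sum>i\<in>UNIV. \<Sum>j\<in>UNIV. Poly_Mapping.single (ee i r + ee j 1) (A i j)) u
        = (\<Sum>i\<in>UNIV. \<Sum>j\<in>UNIV. if ee i r + ee j 1 = u then A i j else 0)"
      by (simp add: lookup_sum lookup_single when_def)
    show "Poly_Mapping.lookup F u = Poly_Mapping.lookup (\<Sum>i\<in>UNIV. \<Sum>j\<in>UNIV. Poly_Mapping.single (ee i r + ee j 1) (A i j)) u"
    proof (cases "\<exists>i j. u = ee i r + ee j 1")
      case True
      then obtain i0 j0 where u: "u = ee i0 r + ee j0 1" by blast
      have "(\<Sum>i\<in>UNIV. \<Sum>j\<in>UNIV. if ee i r + ee j 1 = u then A i j else 0) =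
            (\<Sum>i\<in>UNIV. \<Sum>j\<in>UNIV. if i = i0 \<and> j = j0 then A i j else 0)"
      proof (intro sum.cong refl)
        fix i j
        have "(ee i r + ee j 1 = u) = (i = i0 \<and> j = j0)"
          using ee_unique[OF r2, of i j i0 j0] u by auto
        then show "(if ee i r + ee j 1 = u then A i j else 0) = (if i = i0 \<and> j = j0 then A i j else 0)"
          by simp
      qed
      also have "\<dots> = (\<Sum>i\<in>UNIV. if i = i0 then A i0 j0 else 0)"
      proof (intro sum.cong refl)
        fix i
        show "(\<Sum>j\<in>UNIV. if i = i0 \<and> j = j0 then A i j else 0) = (if i = i0 then A i0 j0 else 0)"
          by (cases "i = i0") simp_all
      qed
      also have "\<dots> = A i0 j0" by simp
      finally show ?thesis using L u by (simp add: A_def)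
    next
      case False
      then have "u \<notin> Poly_Mapping.keys F" using shp by blast
      moreover have "\<forall>i j. ee i r + ee j 1 \<noteq> u" using False by auto
      ultimately show ?thesis using L by (simp add: in_keys_iff)
    qed
  qed
  have "Poly_Mapping.keys F \<noteq> {}" using nonzero by simp
  then obtain m where m: "m \<in> Poly_Mapping.keys F" by blast
  then obtain i0 j0 where m0: "m = ee i0 r + ee j0 1" using shp by blast
  have A0: "A i0 j0 \<noteq> 0" using m m0 by (simp add: A_def in_keys_iff)
  have "A i0 j0 = c * A j0 i0 ^ r" by (rule rel)
  also have "\<dots> = c * (c * A i0 j0 ^ r) ^ r" by (simp only: rel[of j0 i0])
  also have "\<dots> = c ^ (r + 1) * A i0 j0 ^ (r * r)"
    by (simp add: power_mult_distrib power_mult power_add mult_ac)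
  also have "A i0 j0 ^ (r * r) = A i0 j0" using ff_power_card[of "A i0 j0"] qq by simp
  finally have cr: "c ^ (r + 1) = 1" using A0 by simp
  obtain \<mu> :: 'a where mu: "\<mu> \<noteq> 0" "\<mu> ^ (r - 1) = c" using ff_root_exists[OF q r2 cr] by blast
  have mur: "\<mu> ^ r = \<mu> * c"
    using mu(2) r2 by (cases r) auto
  define H where "H i j = \<mu> * A i j" for i j
  have herm: "hermitian_matrix r H"
    unfolding hermitian_matrix_def
  proof (intro allI)
    fix i j
    have "H j i ^ r = \<mu> ^ r * A j i ^ r" by (simp add: H_def power_mult_distrib)
    also have "\<dots> = \<mu> * (c * A j i ^ r)" by (simp add: mur mult_ac)
    also have "\<dots> = H i j" by (simp add: H_def rel[of i j])
    finally show "H j i ^ r = H i j" .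
  qed
  have Hne: "H \<noteq> (\<lambda>_ _. 0)"
  proof
    assume "H = (\<lambda>_ _. 0)"
    then have "H i0 j0 = 0" by simp
    then show False using A0 mu(1) by (simp add: H_def)
  qed
  have hp: "hermitian_poly r H = (\<Sum>i\<in>UNIV. \<Sum>j\<in>UNIV. Poly_Mapping.single (ee i r + ee j 1) (H i j))"
    unfolding hermitian_poly_def
    by (intro sum.cong refl) (simp add: const_def var_pow_def var_def mmonom_def mult_single)
  have "const (inverse \<mu>) * hermitian_poly r H =
      (\<Sum>i\<in>UNIV. \<Sum>j\<in>UNIV. Poly_Mapping.single (ee i r + ee j 1) (inverse \<mu> * H i j))"
    unfolding hp by (simp add: sum_distrib_left const_def mmonom_def mult_single)
  also have "\<dots> = F"
    using mu(1) by (subst repr) (simp add: H_def mult.assoc[symmetric])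
  finally have "F = const (inverse \<mu>) * hermitian_poly r H" by simp
  moreover have "inverse \<mu> \<noteq> 0" using mu(1) by simp
  ultimately show ?thesis unfolding is_hermitian_def using Hne herm by blast
qed


end
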